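(* Every Guvab $(G,u,v,\alpha,\beta)$ satisfies exactly one of the following four conditions: (1) $\lim_{k\to\infty}W_k=1$ and $\beta<1$; (2) $\lim_{k\to\infty}W_k=\frac12$ and $\beta<1$; (3) $\lim_{k\to\infty}W_k=0$ and $\beta<1$; (4) $\beta=1$.
   Context: A Guvab is a tuple $(G,u,v,\alpha,\beta)$ where $G$ is a finite, connected, simple graph, $u,v\in V(G)$, and $\alpha,\beta\in[0,1]$ with $\alpha\le\beta$. A random walk on $G$ with starting vertex $w$ and laziness $\gamma$ is the Markov chain $R_0=w$ and, for $i\ge1$, $R_i=R_{i-1}$ with probability $\gamma$ and $R_i=t$ with probability $\frac{1-\gamma}{\deg(R_{i-1})}$ for each neighbor $t$ of $R_{i-1}$. $\mu_k$ is the distribution after $k$ steps of the walk from $u$ with laziness $\alpha$, $\nu_k$ that of the walk from $v$ with laziness $\beta$, and $W_k=W(\mu_k,\nu_k)$ is the Wasserstein ($L^1$ optimal transport) distance with respect to the graph distance: the minimum over transportation plans (nonnegative $T$ on $V(G)\times V(G)$ with marginals $\mu_k,\nu_k$) of $\sum d(w_1,w_2)T(w_1,w_2)$. (Implicit in the statement: when $\beta<1$ the limit $\lim_k W_k$ exists.) *)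

theory Defs
  imports "HOL-Analysis.Analysis"
begin

definition simple_graph :: "'a set \<Rightarrow> ('a \<Rightarrow> 'a \<Rightarrow> bool) \<Rightarrow> bool" where
  "simple_graph V E \<longleftrightarrow> finite V \<and> V \<noteq> {} \<and>
     (\<forall>x y. E x y \<longrightarrow> x \<in> V \<and> y \<in> V) \<and>
     (\<forall>x. \<not> E x x) \<and> (\<forall>x y. E x y \<longrightarrow> E y x)"

definition connected_graph :: "'a set \<Rightarrow> ('a \<Rightarrow> 'a \<Rightarrow> bool) \<Rightarrow> bool" where
  "connected_graph V E \<longleftrightarrow> (\<forall>x\<in>V. \<forall>y\<in>V. \<exists>n. (E ^^ n) x y)"

definition gdist :: "('a \<Rightarrow> 'a \<Rightarrow> bool) \<Rightarrow> 'a \<Rightarrow> 'a \<Rightarrow> nat" where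
  "gdist E x y = (LEAST n. (E ^^ n) x y)"

definition deg :: "'a set \<Rightarrow> ('a \<Rightarrow> 'a \<Rightarrow> bool) \<Rightarrow> 'a \<Rightarrow> nat" where
  "deg V E x = card {y\<in>V. E x y}"

text \<open>One step of the lazy random walk with laziness g acting on a distribution.
  (At an isolated vertex -- only possible in the one-vertex graph -- the walk stays put.)\<close>
definition walk_step :: "'a set \<Rightarrow> ('a \<Rightarrow> 'a \<Rightarrow> bool) \<Rightarrow> real \<Rightarrow> ('a \<Rightarrow> real) \<Rightarrow> ('a \<Rightarrow> real)" where
  "walk_step V E g mu = (\<lambda>w.
     (if deg V E w = 0 then mu w else g * mu w) +
     (\<Sum>x\<in>V. if E x w then (1 - g) * mu x / real (deg V E x) else 0))"

primrec walk_dist :: "'a set \<Rightarrow> ('a \<Rightarrow> 'a \<Rightarrow> bool) \<Rightarrow> real \<Rightarrow> 'a \<Rightarrow> nat \<Rightarrow> ('a \<Rightarrow> real)" where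
  "walk_dist V E g w 0 = (\<lambda>x. if x = w then 1 else 0)"
| "walk_dist V E g w (Suc k) = walk_step V E g (walk_dist V E g w k)"

definition transport_plan :: "'a set \<Rightarrow> ('a \<Rightarrow> real) \<Rightarrow> ('a \<Rightarrow> real) \<Rightarrow> ('a \<times> 'a \<Rightarrow> real) \<Rightarrow> bool" where
  "transport_plan V mu nu T \<longleftrightarrow>
     (\<forall>x\<in>V. \<forall>y\<in>V. T (x, y) \<ge> 0) \<and>
     (\<forall>x\<in>V. (\<Sum>y\<in>V. T (x, y)) = mu x) \<and>
     (\<forall>y\<in>V. (\<Sum>x\<in>V. T (x, y)) = nu y)"

definition wasserstein :: "'a set \<Rightarrow> ('a \<Rightarrow> 'a \<Rightarrow> bool) \<Rightarrow> ('a \<Rightarrow> real) \<Rightarrow> ('a \<Rightarrow> real) \<Rightarrow> real" where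
  "wasserstein V E mu nu = Inf {(\<Sum>p\<in>V \<times> V. real (gdist E (fst p) (snd p)) * T p) | T. transport_plan V mu nu T}"

end

theory Submission
  imports Defs
begin


lemma relpowp_sym:
  assumes "\<And>x y. E x y \<Longrightarrow> E y x"
  shows "(E ^^ n) x y \<Longrightarrow> (E ^^ n) y x"
proof (induction n arbitrary: y)
  case 0 then show ?case by auto
next
  case (Suc n)
  then obtain z where "(E ^^ n) x z" "E z y" by (auto elim: relpowp_Suc_E)
  then show ?case using Suc assms by (meson relpowp_Suc_I2)
qed

locale gctx =
  fixes V :: "'a set" and E :: "'a \<Rightarrow> 'a \<Rightarrow> bool"
  assumes sg: "simple_graph V E" and conn: "connected_graph V E"
    and degpos: "\<And>x. x \<in> V \<Longrightarrow> 0 < deg V E x"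
begin

lemma finV: "finite V" and Vne: "V \<noteq> {}" and EV: "E x y \<Longrightarrow> x \<in> V \<and> y \<in> V"
  and irr: "\<not> E x x" and Esym: "E x y \<Longrightarrow> E y x"
  using sg unfolding simple_graph_def by auto

abbreviation dg where "dg x \<equiv> deg V E x"

lemma reach: "x \<in> V \<Longrightarrow> y \<in> V \<Longrightarrow> \<exists>n. (E^^n) x y"
  using conn unfolding connected_graph_def by auto

lemma relpow_V: "(R^^n) x y \<Longrightarrow> x \<in> V \<Longrightarrow> (\<And>a b. R a b \<Longrightarrow> a \<in> V \<Longrightarrow> b \<in> V) \<Longrightarrow> y \<in> V"
proof (induction n arbitrary: y)
  case 0 then show ?case by auto
next
  case (Suc n)
  then obtain z where "(R ^^ n) x z" "R z y" by (auto elim: relpowp_Suc_E)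
  then show ?case using Suc by blast
qed

lemma sym_pow: "(E^^n) x y \<Longrightarrow> (E^^n) y x"
  using relpowp_sym[of E] Esym by blast

lemma gdist_path: "x\<in>V \<Longrightarrow> y\<in>V \<Longrightarrow> (E ^^ gdist E x y) x y"
  unfolding gdist_def using reach by (metis LeastI_ex)

lemma gdist_le: "(E^^n) x y \<Longrightarrow> gdist E x y \<le> n"
  unfolding gdist_def by (rule Least_le)

lemma gdist_refl: "gdist E x x = 0"
  using gdist_le[of 0 x x] by simp

lemma gdist_pos: "x \<noteq> y \<Longrightarrow> x\<in>V \<Longrightarrow> y\<in>V \<Longrightarrow> 1 \<le> gdist E x y"
  using gdist_path[of x y] by (cases "gdist E x y") auto

lemma gdist_edge: "E x y \<Longrightarrow> gdist E x y = 1"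
proof -
  assume e: "E x y"
  have "gdist E x y \<le> 1" using gdist_le[of "Suc 0" x y] e by (metis relpowp_Suc_0 One_nat_def)
  moreover have "x \<noteq> y" using e irr by auto
  ultimately show ?thesis using gdist_pos[of x y] EV[OF e] by auto
qed

lemma gdist_tri: "x\<in>V \<Longrightarrow> y\<in>V \<Longrightarrow> z\<in>V \<Longrightarrow> gdist E x z \<le> gdist E x y + gdist E y z"
  using gdist_le[OF relpowp_trans[OF gdist_path gdist_path]] by blast

lemma deg_sum: "x \<in> V \<Longrightarrow> (\<Sum>y\<in>V. if E x y then c else 0) = real (dg x) * c"
  using sum.inter_filter[of V "\<lambda>_. c" "E x", symmetric] finV by (simp add: deg_def)

lemma deg_sum': "y \<in> V \<Longrightarrow> (\<Sum>x\<in>V. if E x y then c else 0) = real (dg y) * c"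
proof -
  assume "y \<in> V"
  have "(\<Sum>x\<in>V. if E x y then c else 0) = (\<Sum>x\<in>V. if E y x then c else 0)"
    using Esym by (metis)
  then show ?thesis using deg_sum[OF \<open>y\<in>V\<close>] by simp
qed

lemma deg_out: "x \<notin> V \<Longrightarrow> dg x = 0"
proof -
  assume "x \<notin> V"
  then have "{y\<in>V. E x y} = {}" using EV by auto
  then show ?thesis by (metis card.empty deg_def)
qed

lemma step_eq: "w \<in> V \<Longrightarrow> walk_step V E g f w
   = g * f w + (\<Sum>x\<in>V. if E x w then (1-g) * f x / real (dg x) else 0)"
  using degpos[of w] by (simp add: walk_step_def)

lemma step_eq0: "w \<in> V \<Longrightarrow> walk_step V E 0 f w
   = (\<Sum>x\<in>V. if E x w then f x / real (dg x) else 0)"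
  using step_eq[of w 0 f] by (simp cong: if_cong)

lemma step_out: "w \<notin> V \<Longrightarrow> walk_step V E g f w = f w"
  using deg_out[of w] EV by (auto simp: walk_step_def intro!: sum.neutral)

lemma step_diff: "walk_step V E g (\<lambda>x. f x - h x) w = walk_step V E g f w - walk_step V E g h w"
proof -
  have "(\<Sum>x\<in>V. if E x w then (1-g) * (f x - h x) / real (dg x) else 0)
     = (\<Sum>x\<in>V. if E x w then (1-g) * f x / real (dg x) else 0)
       - (\<Sum>x\<in>V. if E x w then (1-g) * h x / real (dg x) else 0)"
    by (simp add: sum_subtractf[symmetric] diff_divide_distrib right_diff_distrib if_distrib cong: if_cong)
  then show ?thesis by (simp add: walk_step_def algebra_simps)
qed

lemma step_mass: "(\<Sum>w\<in>V. walk_step V E g f w) = (\<Sum>x\<in>V. f x)"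
proof -
  have "(\<Sum>w\<in>V. walk_step V E g f w)
      = (\<Sum>w\<in>V. g * f w) + (\<Sum>w\<in>V. \<Sum>x\<in>V. if E x w then (1-g) * f x / real (dg x) else 0)"
    by (simp add: step_eq sum.distrib)
  also have "(\<Sum>w\<in>V. \<Sum>x\<in>V. if E x w then (1-g) * f x / real (dg x) else 0)
      = (\<Sum>x\<in>V. \<Sum>w\<in>V. if E x w then (1-g) * f x / real (dg x) else 0)"
    by (rule sum.swap)
  also have "\<dots> = (\<Sum>x\<in>V. (1-g) * f x)"
    by (rule sum.cong) (use degpos in \<open>auto simp: deg_sum\<close>)
  also have "(\<Sum>w\<in>V. g * f w) + (\<Sum>x\<in>V. (1 - g) * f x) = (\<Sum>x\<in>V. f x)"
    by (simp add: sum.distrib[symmetric] algebra_simps)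
  finally show ?thesis .
qed

lemma step_nonneg: "0 \<le> g \<Longrightarrow> g \<le> 1 \<Longrightarrow> (\<And>x. 0 \<le> f x) \<Longrightarrow> 0 \<le> walk_step V E g f w"
  unfolding walk_step_def by (auto intro!: add_nonneg_nonneg sum_nonneg divide_nonneg_nonneg mult_nonneg_nonneg)

lemma wd_nonneg: "0 \<le> g \<Longrightarrow> g \<le> 1 \<Longrightarrow> 0 \<le> walk_dist V E g x k w"
  by (induction k arbitrary: w) (auto intro: step_nonneg)

lemma wd_out: "x \<in> V \<Longrightarrow> w \<notin> V \<Longrightarrow> walk_dist V E g x k w = 0"
  by (induction k) (auto simp: step_out)

lemma wd_mass: "x \<in> V \<Longrightarrow> (\<Sum>w\<in>V. walk_dist V E g x k w) = 1"
  by (induction k) (auto simp: step_mass finV)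

definition RR :: "real \<Rightarrow> 'a \<Rightarrow> 'a \<Rightarrow> bool" where
  "RR g a b \<longleftrightarrow> E a b \<or> (0 < g \<and> a = b \<and> a \<in> V)"

lemma RR_V: "RR g a b \<Longrightarrow> a \<in> V \<and> b \<in> V"
  unfolding RR_def using EV by auto

lemma wd_pos: "0 \<le> g \<Longrightarrow> g < 1 \<Longrightarrow> x \<in> V \<Longrightarrow> ((RR g)^^n) x z \<Longrightarrow> 0 < walk_dist V E g x n z"
proof (induction n arbitrary: z)
  case 0 then show ?case by auto
next
  case (Suc n)
  then obtain y where y: "((RR g) ^^ n) x y" "RR g y z" by (auto elim: relpowp_Suc_E)
  have ih: "0 < walk_dist V E g x n y" using Suc y by auto
  have zV: "z \<in> V" "y \<in> V" using RR_V[OF y(2)] by auto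
  let ?mu = "walk_dist V E g x n"
  have nn: "\<And>w. 0 \<le> ?mu w" using wd_nonneg Suc by auto
  have eq: "walk_dist V E g x (Suc n) z = g * ?mu z + (\<Sum>x\<in>V. if E x z then (1-g) * ?mu x / real (dg x) else 0)"
    using step_eq[OF zV(1)] by simp
  have S0: "0 \<le> (\<Sum>x\<in>V. if E x z then (1-g) * ?mu x / real (dg x) else 0)"
    using nn Suc.prems by (auto intro!: sum_nonneg divide_nonneg_nonneg mult_nonneg_nonneg)
  show ?case
  proof (cases "E y z")
    case True
    have "(if E y z then (1-g) * ?mu y / real (dg y) else 0) \<le> (\<Sum>x\<in>V. if E x z then (1-g) * ?mu x / real (dg x) else 0)"
      by (rule member_le_sum) (use zV nn Suc.prems finV in \<open>auto intro!: divide_nonneg_nonneg mult_nonneg_nonneg\<close>)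
    moreover have "0 < (1-g) * ?mu y / real (dg y)" using ih Suc.prems degpos[OF zV(2)] by auto
    moreover have "0 \<le> g * ?mu z" using nn Suc.prems by auto
    ultimately show ?thesis using True eq by auto
  next
    case False
    then have "0 < g" "y = z" using y(2) unfolding RR_def by auto
    then show ?thesis using eq S0 ih by (simp add: add_pos_nonneg)
  qed
qed

lemma wd_supp0: "x \<in> V \<Longrightarrow> walk_dist V E 0 x n z \<noteq> 0 \<Longrightarrow> (E^^n) x z"
proof (induction n arbitrary: z)
  case 0 then show ?case by (auto split: if_splits)
next
  case (Suc n)
  have zV: "z \<in> V" using Suc wd_out by blast
  let ?mu = "walk_dist V E 0 x n"
  have "(\<Sum>y\<in>V. if E y z then ?mu y / real (dg y) else 0) \<noteq> 0"
    using Suc.prems(2) step_eq0[OF zV, of ?mu] by simp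
  then obtain y where "y \<in> V" "E y z" "?mu y \<noteq> 0"
    by (rule sum.not_neutral_contains_not_neutral) (auto split: if_splits)
  then show ?case using Suc.IH[of y] Suc.prems by (meson relpowp_Suc_I)
qed


lemma iter_rep:
  assumes rec: "\<And>k w. w \<in> V \<Longrightarrow> f (Suc k) w = walk_step V E g (f k) w"
  shows "w \<in> V \<Longrightarrow> f (k + N) w = (\<Sum>x\<in>V. f k x * walk_dist V E g x N w)"
proof (induction N arbitrary: w)
  case 0
  then show ?case using finV by (simp add: if_distrib cong: if_cong)
next
  case (Suc N)
  let ?Q = "\<lambda>x. walk_dist V E g x N"
  have "f (k + Suc N) w = walk_step V E g (f (k + N)) w" using rec Suc.prems by simp
  also have "\<dots> = g * f (k + N) w + (\<Sum>y\<in>V. if E y w then (1-g) * f (k+N) y / real (dg y) else 0)"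
    using step_eq[OF Suc.prems] by simp
  also have "\<dots> = g * (\<Sum>x\<in>V. f k x * ?Q x w) + (\<Sum>y\<in>V. if E y w then (1-g) * (\<Sum>x\<in>V. f k x * ?Q x y) / real (dg y) else 0)"
    using Suc.IH Suc.prems by (auto intro!: sum.cong)
  also have "(\<Sum>y\<in>V. if E y w then (1-g) * (\<Sum>x\<in>V. f k x * ?Q x y) / real (dg y) else 0)
     = (\<Sum>y\<in>V. \<Sum>x\<in>V. f k x * (if E y w then (1-g) * ?Q x y / real (dg y) else 0))"
    by (rule sum.cong) (auto simp: sum_distrib_left sum_divide_distrib algebra_simps)
  also have "\<dots> = (\<Sum>x\<in>V. \<Sum>y\<in>V. f k x * (if E y w then (1-g) * ?Q x y / real (dg y) else 0))"
    by (rule sum.swap)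
  finally have "f (k + Suc N) w = (\<Sum>x\<in>V. f k x * (g * ?Q x w) + (\<Sum>y\<in>V. f k x * (if E y w then (1-g) * ?Q x y / real (dg y) else 0)))"
    by (simp add: sum.distrib sum_distrib_left algebra_simps)
  also have "\<dots> = (\<Sum>x\<in>V. f k x * walk_dist V E g x (Suc N) w)"
    by (rule sum.cong) (auto simp: step_eq[OF Suc.prems] sum_distrib_left algebra_simps)
  finally show ?case .
qed

lemma contract:
  fixes h :: "'a \<Rightarrow> real"
  assumes hs: "(\<Sum>x\<in>V. h x) = 0" and zV: "z \<in> V"
    and mn: "\<And>x. x \<in> V \<Longrightarrow> h x \<noteq> 0 \<Longrightarrow> \<delta> \<le> Q x z"
    and Qnn: "\<And>x w. x \<in> V \<Longrightarrow> w \<in> V \<Longrightarrow> 0 \<le> Q x w"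
    and Qs: "\<And>x. x \<in> V \<Longrightarrow> (\<Sum>w\<in>V. Q x w) = 1"
  shows "(\<Sum>w\<in>V. \<bar>\<Sum>x\<in>V. h x * Q x w\<bar>) \<le> (1 - \<delta>) * (\<Sum>x\<in>V. \<bar>h x\<bar>)"
proof -
  let ?H = "\<Sum>x\<in>V. \<bar>h x\<bar>"
  have b: "\<bar>\<Sum>x\<in>V. h x * Q x w\<bar> \<le> (\<Sum>x\<in>V. \<bar>h x\<bar> * Q x w) - (if w = z then \<delta> * ?H else 0)"
    if wV: "w \<in> V" for w
  proof (cases "w = z")
    case True
    have "(\<Sum>x\<in>V. h x * Q x z) = (\<Sum>x\<in>V. h x * (Q x z - \<delta>)) + \<delta> * (\<Sum>x\<in>V. h x)"
      by (simp add: sum_distrib_left sum.distrib[symmetric] algebra_simps)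
    also have "\<dots> = (\<Sum>x\<in>V. h x * (Q x z - \<delta>))" using hs by simp
    finally have "\<bar>\<Sum>x\<in>V. h x * Q x z\<bar> \<le> (\<Sum>x\<in>V. \<bar>h x * (Q x z - \<delta>)\<bar>)"
      by (metis sum_abs)
    also have "\<dots> = (\<Sum>x\<in>V. \<bar>h x\<bar> * Q x z - \<delta> * \<bar>h x\<bar>)"
    proof (rule sum.cong)
      fix x assume "x \<in> V"
      show "\<bar>h x * (Q x z - \<delta>)\<bar> = \<bar>h x\<bar> * Q x z - \<delta> * \<bar>h x\<bar>"
      proof (cases "h x = 0")
        case False
        then have "0 \<le> Q x z - \<delta>" using mn[OF \<open>x \<in> V\<close>] by simp
        then have "\<bar>h x * (Q x z - \<delta>)\<bar> = \<bar>h x\<bar> * (Q x z - \<delta>)" by (simp add: abs_mult)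
        then show ?thesis by (simp add: algebra_simps)
      qed simp
    qed simp
    also have "\<dots> = (\<Sum>x\<in>V. \<bar>h x\<bar> * Q x z) - \<delta> * ?H"
      by (simp add: sum_subtractf sum_distrib_left)
    finally show ?thesis using True by simp
  next
    case False
    have "\<bar>\<Sum>x\<in>V. h x * Q x w\<bar> \<le> (\<Sum>x\<in>V. \<bar>h x * Q x w\<bar>)" by (rule sum_abs)
    also have "\<dots> = (\<Sum>x\<in>V. \<bar>h x\<bar> * Q x w)"
      by (rule sum.cong) (use Qnn wV in \<open>auto simp: abs_mult\<close>)
    finally show ?thesis using False by simp
  qed
  have "(\<Sum>w\<in>V. \<bar>\<Sum>x\<in>V. h x * Q x w\<bar>) \<le> (\<Sum>w\<in>V. (\<Sum>x\<in>V. \<bar>h x\<bar> * Q x w) - (if w = z then \<delta> * ?H else 0))"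
    by (rule sum_mono) (rule b)
  also have "\<dots> = (\<Sum>w\<in>V. \<Sum>x\<in>V. \<bar>h x\<bar> * Q x w) - \<delta> * ?H"
    using zV finV by (simp add: sum_subtractf)
  also have "(\<Sum>w\<in>V. \<Sum>x\<in>V. \<bar>h x\<bar> * Q x w) = (\<Sum>x\<in>V. \<Sum>w\<in>V. \<bar>h x\<bar> * Q x w)"
    by (rule sum.swap)
  also have "\<dots> = ?H"
    by (rule sum.cong) (use Qs in \<open>auto simp: sum_distrib_left[symmetric]\<close>)
  finally show ?thesis by (simp add: algebra_simps)
qed

lemma contract_wd:
  assumes "(\<Sum>x\<in>V. h x) = 0" "z \<in> V" "\<And>x. x \<in> V \<Longrightarrow> h x \<noteq> 0 \<Longrightarrow> \<delta> \<le> walk_dist V E g x M z"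
    "0 \<le> g" "g \<le> 1"
  shows "(\<Sum>w\<in>V. \<bar>\<Sum>x\<in>V. h x * walk_dist V E g x M w\<bar>) \<le> (1 - \<delta>) * (\<Sum>x\<in>V. \<bar>h x\<bar>)"
  by (rule contract[where Q="\<lambda>x w. walk_dist V E g x M w", OF assms(1,2,3)]) (use assms wd_nonneg wd_mass in auto)

definition dl :: "real \<Rightarrow> nat \<Rightarrow> real" where
  "dl g N = Min ({walk_dist V E g x N z | x z. x \<in> V \<and> z \<in> V \<and> ((RR g)^^N) x z} \<union> {1})"

lemma dl_pos: "0 \<le> g \<Longrightarrow> g < 1 \<Longrightarrow> 0 < dl g N"
proof -
  assume g: "0 \<le> g" "g < 1"
  have fin: "finite {walk_dist V E g x N z | x z. x \<in> V \<and> z \<in> V \<and> ((RR g)^^N) x z}"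
  proof -
    have "{walk_dist V E g x N z | x z. x \<in> V \<and> z \<in> V \<and> ((RR g)^^N) x z}
       \<subseteq> (\<lambda>(x,z). walk_dist V E g x N z) ` (V \<times> V)" by auto
    then show ?thesis using finV finite_subset by blast
  qed
  show ?thesis unfolding dl_def using fin wd_pos[OF g] by (auto simp: Min_gr_iff)
qed

lemma dl_le: "x \<in> V \<Longrightarrow> z \<in> V \<Longrightarrow> ((RR g)^^N) x z \<Longrightarrow> dl g N \<le> walk_dist V E g x N z"
proof -
  assume a: "x \<in> V" "z \<in> V" "((RR g)^^N) x z"
  have fin: "finite {walk_dist V E g x N z | x z. x \<in> V \<and> z \<in> V \<and> ((RR g)^^N) x z}"
  proof -
    have "{walk_dist V E g x N z | x z. x \<in> V \<and> z \<in> V \<and> ((RR g)^^N) x z}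
       \<subseteq> (\<lambda>(x,z). walk_dist V E g x N z) ` (V \<times> V)" by auto
    then show ?thesis using finV finite_subset by blast
  qed
  show ?thesis unfolding dl_def using a fin by (intro Min_le) auto
qed

lemma conv:
  assumes g: "0 \<le> g" "g < 1"
    and rec: "\<And>k w. w \<in> V \<Longrightarrow> f (Suc k) w = walk_step V E g (f k) w"
    and zs: "\<And>k. (\<Sum>x\<in>V. f k x) = 0"
    and mn: "\<And>k. \<exists>z\<in>V. \<forall>x\<in>V. f k x \<noteq> 0 \<longrightarrow> ((RR g)^^N) x z"
  shows "(\<lambda>k. \<Sum>x\<in>V. \<bar>f k x\<bar>) \<longlonglongrightarrow> 0"
proof -
  define e where "e = (\<lambda>k. \<Sum>x\<in>V. \<bar>f k x\<bar>)"
  define \<delta> where "\<delta> = dl g N"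
  have dpos: "0 < \<delta>" unfolding \<delta>_def using dl_pos g by auto
  have Qnn: "\<And>x w M. x \<in> V \<Longrightarrow> w \<in> V \<Longrightarrow> 0 \<le> walk_dist V E g x M w" using wd_nonneg g by auto
  have Qs: "\<And>x M. x \<in> V \<Longrightarrow> (\<Sum>w\<in>V. walk_dist V E g x M w) = 1" using wd_mass by auto
  obtain z0 where z0: "z0 \<in> V" using Vne by blast
  have step1: "e (Suc k) \<le> e k" for k
  proof -
    have "e (Suc k) = (\<Sum>w\<in>V. \<bar>\<Sum>x\<in>V. f k x * walk_dist V E g x 1 w\<bar>)"
      unfolding e_def using iter_rep[of f g, OF rec, of _ k 1] by (intro sum.cong) auto
    also have "\<dots> \<le> (1 - 0) * e k"
      unfolding e_def by (intro contract_wd[OF zs z0] wd_nonneg) (use g in auto)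
    finally show ?thesis by simp
  qed
  have stepN: "e (k + N) \<le> (1 - \<delta>) * e k" for k
  proof -
    obtain z where z: "z \<in> V" "\<forall>x\<in>V. f k x \<noteq> 0 \<longrightarrow> ((RR g)^^N) x z" using mn by blast
    have "e (k + N) = (\<Sum>w\<in>V. \<bar>\<Sum>x\<in>V. f k x * walk_dist V E g x N w\<bar>)"
      unfolding e_def using iter_rep[of f g, OF rec, of _ k N] by (intro sum.cong) auto
    also have "\<dots> \<le> (1 - \<delta>) * e k"
      unfolding e_def using z dl_le \<delta>_def g by (intro contract_wd[OF zs z(1)]) auto
    finally show ?thesis .
  qed
  have dec: "decseq e" using step1 by (intro decseq_SucI) 
  have nn: "\<forall>k. 0 \<le> e k" unfolding e_def by (auto intro: sum_nonneg)
  obtain L where L: "e \<longlonglongrightarrow> L" "\<forall>i. L \<le> e i" using decseq_convergent[OF dec nn] by blast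
  have L0: "0 \<le> L"
    by (rule LIMSEQ_le_const[OF L(1)]) (use nn in blast)
  have t1: "(\<lambda>k. e (k + N)) \<longlonglongrightarrow> L" using L(1) by (rule LIMSEQ_ignore_initial_segment)
  have t2: "(\<lambda>k. (1 - \<delta>) * e k) \<longlonglongrightarrow> (1 - \<delta>) * L" using L(1) by (intro tendsto_mult_left)
  have "L \<le> (1 - \<delta>) * L" by (rule LIMSEQ_le[OF t1 t2]) (use stepN in blast)
  then have "\<delta> * L \<le> 0" by (simp add: algebra_simps)
  then have "L \<le> 0" using dpos by (simp add: mult_le_0_iff)
  then have "L = 0" using L0 by simp
  then show ?thesis using L(1) unfolding e_def by simp
qed


definition Ev where "Ev a b \<longleftrightarrow> (\<exists>n. (E^^n) a b \<and> even n)"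
definition nonbip where "nonbip \<longleftrightarrow> (\<forall>a\<in>V. \<forall>b\<in>V. Ev a b)"
definition par where "par w k x \<longleftrightarrow> (\<exists>n. (E^^n) w x \<and> even (n + k))"
definition Dsum where "Dsum = (\<Sum>x\<in>V. real (dg x))"
definition stat where "stat x = real (dg x) / Dsum"
definition tgt where "tgt w k x = (if x \<in> V \<and> par w k x then 2 * stat x else 0)"
definition Dm where "Dm = Max ((\<lambda>(x,y). gdist E x y) ` (V \<times> V))"

lemma Dm: "x \<in> V \<Longrightarrow> y \<in> V \<Longrightarrow> gdist E x y \<le> Dm"
  unfolding Dm_def using finV by (intro Max_ge) auto

lemma Dsum_pos: "0 < Dsum"
  unfolding Dsum_def using finV Vne degpos by (intro sum_pos) auto

lemma stat_nn: "0 \<le> stat x"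
  unfolding stat_def using Dsum_pos by auto

lemma stat_sum: "(\<Sum>x\<in>V. stat x) = 1"
  unfolding stat_def using Dsum_pos by (simp add: sum_divide_distrib[symmetric] Dsum_def)

lemma stat_edge: "E x w \<Longrightarrow> c * stat x / real (dg x) = c / Dsum"
proof -
  assume "E x w"
  then have "0 < dg x" using EV degpos by auto
  then show ?thesis unfolding stat_def by (simp add: field_simps)
qed

lemma stat_step: "w \<in> V \<Longrightarrow> walk_step V E g stat w = stat w"
proof -
  assume wV: "w \<in> V"
  have "(\<Sum>x\<in>V. if E x w then (1-g) * stat x / real (dg x) else 0) = (\<Sum>x\<in>V. if E x w then (1-g) / Dsum else 0)"
    by (rule sum.cong) (auto simp: stat_edge)
  also have "\<dots> = real (dg w) * ((1-g) / Dsum)" by (rule deg_sum'[OF wV])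
  finally show ?thesis using step_eq[OF wV, of g stat] Dsum_pos unfolding stat_def by (simp add: field_simps)
qed

lemma RR0: "RR 0 = E"
  unfolding RR_def by (intro ext) auto

lemma pad2: "z \<in> V \<Longrightarrow> (E^^2) z z"
proof -
  assume zV: "z \<in> V"
  have "{y\<in>V. E z y} \<noteq> {}" using degpos[OF zV] unfolding deg_def by (metis card.empty less_irrefl)
  then obtain y where "E z y" by auto
  then have "E y z" using Esym by auto
  with \<open>E z y\<close> show ?thesis by (metis numeral_2_eq_2 relpowp_Suc_I relpowp_Suc_0)
qed

lemma pad: "(E^^n) x z \<Longrightarrow> z \<in> V \<Longrightarrow> (E^^(n + 2*m)) x z"
proof (induction m)
  case 0 then show ?case by simp
next
  case (Suc m)
  have "(E^^(n + 2*m + 2)) x z" using relpowp_trans[OF Suc.IH[OF Suc.prems] pad2[OF Suc.prems(2)]] .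
  then show ?case by (simp add: algebra_simps)
qed

lemma Ev_bound: "\<exists>N. \<forall>x\<in>V. \<forall>z\<in>V. Ev x z \<longrightarrow> (E^^N) x z"
proof -
  define nn where "nn = (\<lambda>(x,z). LEAST n. (E^^n) x z \<and> even n)"
  define M where "M = Max (nn ` (V \<times> V))"
  have "(E^^(2*M)) x z" if "x \<in> V" "z \<in> V" "Ev x z" for x z
  proof -
    have ex: "\<exists>n. (E^^n) x z \<and> even n" using that(3) unfolding Ev_def by blast
    have l: "(E^^(nn (x,z))) x z \<and> even (nn (x,z))"
      using LeastI_ex[OF ex] unfolding nn_def by simp
    have le: "nn (x,z) \<le> M" unfolding M_def using finV that by (intro Max_ge) auto
    obtain m where m: "nn (x,z) = 2*m" using l by (auto elim: evenE)
    have "(E^^(nn (x,z) + 2*(M - m))) x z" using pad l that by blast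
    moreover have "nn (x,z) + 2*(M - m) = 2*M" using le m by simp
    ultimately show ?thesis by simp
  qed
  then show ?thesis by blast
qed

lemma RR_refl: "0 < g \<Longrightarrow> z \<in> V \<Longrightarrow> ((RR g)^^m) z z"
  by (induction m) (auto simp: RR_def intro: relpowp_Suc_I)

lemma RR_full: "0 < g \<Longrightarrow> \<exists>N. \<forall>x\<in>V. \<forall>z\<in>V. ((RR g)^^N) x z"
proof -
  assume g: "0 < g"
  have "((RR g)^^Dm) x z" if "x \<in> V" "z \<in> V" for x z
  proof -
    have "((RR g)^^(gdist E x z)) x z"
      using gdist_path[OF that] by (rule relpowp_mono[rotated]) (simp add: RR_def)
    from relpowp_trans[OF this RR_refl[OF g that(2)]]
    have "((RR g)^^(gdist E x z + (Dm - gdist E x z))) x z" .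
    then show ?thesis using Dm[OF that] by simp
  qed
  then show ?thesis by blast
qed

lemma nonbip_full: "nonbip \<Longrightarrow> \<exists>N. \<forall>x\<in>V. \<forall>z\<in>V. ((RR 0)^^N) x z"
  using Ev_bound unfolding nonbip_def RR0 by blast

lemma conv_pi:
  assumes g: "0 \<le> g" "g < 1" and wV: "w \<in> V" and c: "0 < g \<or> nonbip"
  shows "(\<lambda>k. \<Sum>x\<in>V. \<bar>walk_dist V E g w k x - stat x\<bar>) \<longlonglongrightarrow> 0"
proof -
  have "\<exists>N. \<forall>x\<in>V. \<forall>z\<in>V. ((RR g)^^N) x z"
  proof (cases "0 < g")
    case True then show ?thesis by (rule RR_full)
  next
    case False then have "g = 0" "nonbip" using g c by auto
    then show ?thesis using nonbip_full by simp
  qed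
  then obtain N where N: "\<forall>x\<in>V. \<forall>z\<in>V. ((RR g)^^N) x z" by blast
  obtain z0 where z0: "z0 \<in> V" using Vne by blast
  show ?thesis
  proof (rule conv[OF g, where f="\<lambda>k x. walk_dist V E g w k x - stat x" and N=N])
    fix k w' assume "w' \<in> V"
    then show "walk_dist V E g w (Suc k) w' - stat w' = walk_step V E g (\<lambda>x. walk_dist V E g w k x - stat x) w'"
      by (simp add: step_diff stat_step)
  next
    fix k show "(\<Sum>x\<in>V. walk_dist V E g w k x - stat x) = 0"
      by (simp add: sum_subtractf wd_mass[OF wV] stat_sum)
  next
    fix k show "\<exists>z\<in>V. \<forall>x\<in>V. walk_dist V E g w k x - stat x \<noteq> 0 \<longrightarrow> ((RR g)^^N) x z"
      using N z0 by blast
  qed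
qed


lemma par_F1: "w \<in> V \<Longrightarrow> x \<in> V \<Longrightarrow> par w k x \<or> par w (Suc k) x"
proof -
  assume a: "w \<in> V" "x \<in> V"
  obtain n where n: "(E^^n) w x" using reach[OF a] by blast
  show ?thesis
  proof (cases "even (n + k)")
    case True then show ?thesis using n unfolding par_def by blast
  next
    case False then have "even (n + Suc k)" by simp
    then show ?thesis using n unfolding par_def by blast
  qed
qed

lemma par_F2: "\<not> nonbip \<Longrightarrow> w \<in> V \<Longrightarrow> \<not> (par w k x \<and> par w (Suc k) x)"
proof
  assume nb: "\<not> nonbip" and wV: "w \<in> V" and pp: "par w k x \<and> par w (Suc k) x"
  then obtain n1 n2 where n: "(E^^n1) w x" "even (n1 + k)" "(E^^n2) w x" "even (n2 + Suc k)"
    unfolding par_def by blast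
  have xV: "x \<in> V" using relpow_V[OF n(1) wV] EV by blast
  have "Ev a b" if ab: "a \<in> V" "b \<in> V" for a b
  proof -
    obtain p where p: "(E^^p) a w" using reach ab wV by blast
    obtain q where q: "(E^^q) w b" using reach ab wV by blast
    show ?thesis
    proof (cases "even (p + q)")
      case True then show ?thesis using relpowp_trans[OF p q] unfolding Ev_def by blast
    next
      case False
      have "(E^^(p + n1 + n2 + q)) a b"
        using relpowp_trans[OF relpowp_trans[OF relpowp_trans[OF p n(1)] sym_pow[OF n(3)]] q] .
      moreover have "even (p + n1 + n2 + q)" using False n(2,4) by presburger
      ultimately show ?thesis unfolding Ev_def by blast
    qed
  qed
  then show False using nb unfolding nonbip_def by blast
qed

lemma par_F3: "E x y \<Longrightarrow> par w k x \<Longrightarrow> par w (Suc k) y"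
proof -
  assume a: "E x y" "par w k x"
  then obtain n where n: "(E^^n) w x" "even (n + k)" unfolding par_def by blast
  have "(E^^Suc n) w y" using n(1) a(1) by (rule relpowp_Suc_I)
  moreover have "even (Suc n + Suc k)" using n(2) by simp
  ultimately show ?thesis unfolding par_def by blast
qed

lemma par_SS: "par w (Suc (Suc k)) x = par w k x"
  unfolding par_def by simp

lemma par_F5: "par w k x \<Longrightarrow> par w k z \<Longrightarrow> Ev x z"
proof -
  assume "par w k x" "par w k z"
  then obtain n1 n2 where n: "(E^^n1) w x" "even (n1 + k)" "(E^^n2) w z" "even (n2 + k)"
    unfolding par_def by blast
  have "(E^^(n1 + n2)) x z" using relpowp_trans[OF sym_pow[OF n(1)] n(3)] .
  moreover have "even (n1 + n2)" using n(2,4) by presburger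
  ultimately show ?thesis unfolding Ev_def by blast
qed

lemma par_F6: "w \<in> V \<Longrightarrow> walk_dist V E 0 w k x \<noteq> 0 \<Longrightarrow> par w k x"
  using wd_supp0 unfolding par_def by fastforce

lemma par_edge_iff: "\<not> nonbip \<Longrightarrow> w \<in> V \<Longrightarrow> x \<in> V \<Longrightarrow> y \<in> V \<Longrightarrow>
   (par w k x \<and> E x y) \<longleftrightarrow> (\<not> par w k y \<and> E y x)"
proof -
  assume nb: "\<not> nonbip" and V: "w \<in> V" "x \<in> V" "y \<in> V"
  show ?thesis
  proof
    assume a: "par w k x \<and> E x y"
    then have "par w (Suc k) y" using par_F3 by blast
    then show "\<not> par w k y \<and> E y x" using par_F2[OF nb V(1), of k y] a Esym by blast
  next
    assume a: "\<not> par w k y \<and> E y x"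
    then have "par w (Suc k) y" using par_F1[OF V(1) V(3)] by blast
    then have "par w k x" using par_F3[of y x w "Suc k"] a par_SS by simp
    then show "par w k x \<and> E x y" using a Esym by blast
  qed
qed

lemma half_sum: "\<not> nonbip \<Longrightarrow> w \<in> V \<Longrightarrow>
   (\<Sum>x\<in>V. if par w k x then real (dg x) else 0) = Dsum / 2 \<and>
   (\<Sum>x\<in>V. if par w k x then 0 else real (dg x)) = Dsum / 2"
proof -
  assume nb: "\<not> nonbip" and wV: "w \<in> V"
  define A where "A = (\<Sum>x\<in>V. if par w k x then real (dg x) else 0)"
  define B where "B = (\<Sum>x\<in>V. if par w k x then 0 else real (dg x))"
  have AB: "A + B = Dsum" unfolding A_def B_def Dsum_def by (simp add: sum.distrib[symmetric] if_distrib cong: if_cong) 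
  have "A = (\<Sum>x\<in>V. \<Sum>y\<in>V. if par w k x \<and> E x y then 1 else 0)"
    unfolding A_def by (rule sum.cong) (auto simp: deg_sum)
  also have "\<dots> = (\<Sum>x\<in>V. \<Sum>y\<in>V. if \<not> par w k y \<and> E y x then 1 else 0)"
    using par_edge_iff[OF nb wV] by (intro sum.cong refl) auto
  also have "\<dots> = (\<Sum>y\<in>V. \<Sum>x\<in>V. if \<not> par w k y \<and> E y x then 1 else 0)"
    by (rule sum.swap)
  also have "\<dots> = B"
    unfolding B_def by (rule sum.cong) (auto simp: deg_sum)
  finally have "A = B" .
  then show ?thesis using AB unfolding A_def B_def by simp
qed

lemma tgt_sum: "\<not> nonbip \<Longrightarrow> w \<in> V \<Longrightarrow> (\<Sum>x\<in>V. tgt w k x) = 1"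
proof -
  assume nb: "\<not> nonbip" and wV: "w \<in> V"
  have "(\<Sum>x\<in>V. tgt w k x) = (\<Sum>x\<in>V. (2 / Dsum) * (if par w k x then real (dg x) else 0))"
    unfolding tgt_def stat_def by (rule sum.cong) auto
  also have "\<dots> = (2 / Dsum) * (\<Sum>x\<in>V. if par w k x then real (dg x) else 0)"
    by (rule sum_distrib_left[symmetric])
  also have "\<dots> = (2 / Dsum) * (Dsum / 2)"
    by (simp only: conjunct1[OF half_sum[OF nb wV, of k]])
  finally show ?thesis using Dsum_pos by simp
qed

lemma tgt_step: "\<not> nonbip \<Longrightarrow> w \<in> V \<Longrightarrow> y \<in> V \<Longrightarrow> walk_step V E 0 (tgt w k) y = tgt w (Suc k) y"
proof -
  assume nb: "\<not> nonbip" and wV: "w \<in> V" and yV: "y \<in> V"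
  have e: "walk_step V E 0 (tgt w k) y = (\<Sum>x\<in>V. if E x y then tgt w k x / real (dg x) else 0)"
    by (rule step_eq0[OF yV])
  show ?thesis
  proof (cases "par w (Suc k) y")
    case True
    have "(\<Sum>x\<in>V. if E x y then tgt w k x / real (dg x) else 0) = (\<Sum>x\<in>V. if E x y then 2 / Dsum else 0)"
    proof (rule sum.cong)
      fix x assume xV: "x \<in> V"
      show "(if E x y then tgt w k x / real (dg x) else 0) = (if E x y then 2 / Dsum else 0)"
      proof (cases "E x y")
        case True
        then have "par w k x" using par_F3[of y x w "Suc k"] \<open>par w (Suc k) y\<close> Esym par_SS by auto
        then show ?thesis using True xV stat_edge[OF True, of 2] unfolding tgt_def by simp
      qed simp
    qed simp
    also have "\<dots> = real (dg y) * (2 / Dsum)" by (rule deg_sum'[OF yV])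
    finally show ?thesis using e True yV unfolding tgt_def stat_def by simp
  next
    case False
    have "(\<Sum>x\<in>V. if E x y then tgt w k x / real (dg x) else 0) = 0"
    proof (rule sum.neutral, intro ballI)
      fix x assume xV: "x \<in> V"
      show "(if E x y then tgt w k x / real (dg x) else 0) = 0"
      proof (cases "E x y")
        case True
        then have "\<not> par w k x" using par_F3[of x y w k] False by auto
        then show ?thesis unfolding tgt_def by simp
      qed simp
    qed
    then show ?thesis using e False unfolding tgt_def by simp
  qed
qed

lemma conv_bip:
  assumes nb: "\<not> nonbip" and wV: "w \<in> V"
  shows "(\<lambda>k. \<Sum>x\<in>V. \<bar>walk_dist V E 0 w k x - tgt w k x\<bar>) \<longlonglongrightarrow> 0"
proof -
  obtain N where N: "\<forall>x\<in>V. \<forall>z\<in>V. Ev x z \<longrightarrow> (E^^N) x z" using Ev_bound by blast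
  obtain z0 where z0: "z0 \<in> V" using Vne by blast
  show ?thesis
  proof (rule conv[where g=0 and f="\<lambda>k x. walk_dist V E 0 w k x - tgt w k x" and N=N])
    fix k w' assume "w' \<in> V"
    then show "walk_dist V E 0 w (Suc k) w' - tgt w (Suc k) w' = walk_step V E 0 (\<lambda>x. walk_dist V E 0 w k x - tgt w k x) w'"
      using tgt_step[OF nb wV] by (simp add: step_diff)
  next
    fix k show "(\<Sum>x\<in>V. walk_dist V E 0 w k x - tgt w k x) = 0"
      by (simp add: sum_subtractf wd_mass[OF wV] tgt_sum[OF nb wV])
  next
    fix k
    have supp: "par w k x" if "x \<in> V" "walk_dist V E 0 w k x - tgt w k x \<noteq> 0" for x
    proof (cases "walk_dist V E 0 w k x = 0")
      case True then have "tgt w k x \<noteq> 0" using that by simp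
      then show ?thesis unfolding tgt_def by (auto split: if_splits)
    next
      case False then show ?thesis using par_F6[OF wV] by blast
    qed
    show "\<exists>z\<in>V. \<forall>x\<in>V. walk_dist V E 0 w k x - tgt w k x \<noteq> 0 \<longrightarrow> ((RR 0)^^N) x z"
    proof (cases "\<exists>z\<in>V. par w k z")
      case True
      then obtain z where z: "z \<in> V" "par w k z" by blast
      show ?thesis using z N supp par_F5 unfolding RR0 by blast
    next
      case False
      then show ?thesis using supp z0 by blast
    qed
  qed auto
qed

lemma same_side: "w \<in> V \<Longrightarrow> Ev u v \<Longrightarrow> par v k x \<Longrightarrow> par u k x"
proof -
  assume "Ev u v" "par v k x"
  then obtain m n where "(E^^m) u v" "even m" "(E^^n) v x" "even (n + k)" unfolding Ev_def par_def by blast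
  then show ?thesis unfolding par_def using relpowp_trans by (metis (no_types, lifting) add.assoc even_add)
qed

lemma Ev_sym: "Ev u v \<Longrightarrow> Ev v u"
  unfolding Ev_def using sym_pow by blast

lemma opp_side: "u \<in> V \<Longrightarrow> v \<in> V \<Longrightarrow> \<not> Ev u v \<Longrightarrow> par v k x \<longleftrightarrow> par u (Suc k) x"
proof -
  assume V: "u \<in> V" "v \<in> V" and ne: "\<not> Ev u v"
  obtain m where m: "(E^^m) u v" using reach V by blast
  have om: "odd m" using ne m unfolding Ev_def by blast
  show ?thesis
  proof
    assume "par v k x"
    then obtain n where "(E^^n) v x" "even (n + k)" unfolding par_def by blast
    moreover have "even (m + n + Suc k)" using om \<open>even (n+k)\<close> by presburger
    ultimately show "par u (Suc k) x" unfolding par_def using relpowp_trans[OF m] by blast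
  next
    assume "par u (Suc k) x"
    then obtain n where "(E^^n) u x" "even (n + Suc k)" unfolding par_def by blast
    moreover have "even (m + n + k)" using om \<open>even (n + Suc k)\<close> by presburger
    ultimately show "par v k x" unfolding par_def using relpowp_trans[OF sym_pow[OF m]] by blast
  qed
qed


definition cost :: "('a \<times> 'a \<Rightarrow> real) \<Rightarrow> real" where
  "cost T = (\<Sum>x\<in>V. \<Sum>y\<in>V. real (gdist E x y) * T (x,y))"

abbreviation plan where "plan \<equiv> transport_plan V"

lemma cost_eq: "(\<Sum>p\<in>V \<times> V. real (gdist E (fst p) (snd p)) * T p) = cost T"
  unfolding cost_def by (simp add: sum.cartesian_product split_def)

lemma cost_nn: "plan \<mu> \<nu> T \<Longrightarrow> 0 \<le> cost T"
  unfolding cost_def transport_plan_def by (auto intro!: sum_nonneg)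

lemma W_le: "plan \<mu> \<nu> T \<Longrightarrow> wasserstein V E \<mu> \<nu> \<le> cost T"
  unfolding wasserstein_def cost_eq
  by (rule cInf_lower) (auto simp: bdd_below_def intro!: exI[of _ 0] cost_nn)

lemma W_ge: "plan \<mu> \<nu> T0 \<Longrightarrow> (\<And>T. plan \<mu> \<nu> T \<Longrightarrow> c \<le> cost T) \<Longrightarrow> c \<le> wasserstein V E \<mu> \<nu>"
  unfolding wasserstein_def cost_eq
  by (rule cInf_greatest) auto

lemma plan_ex: "(\<And>x. x \<in> V \<Longrightarrow> 0 \<le> \<mu> x) \<Longrightarrow> (\<And>x. x \<in> V \<Longrightarrow> 0 \<le> \<nu> x) \<Longrightarrow>
  (\<Sum>x\<in>V. \<mu> x) = 1 \<Longrightarrow> (\<Sum>x\<in>V. \<nu> x) = 1 \<Longrightarrow> plan \<mu> \<nu> (\<lambda>p. \<mu> (fst p) * \<nu> (snd p))"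
  unfolding transport_plan_def by (auto simp: sum_distrib_left[symmetric] sum_distrib_right[symmetric])

lemma W_nn: "(\<And>x. x \<in> V \<Longrightarrow> 0 \<le> \<mu> x) \<Longrightarrow> (\<And>x. x \<in> V \<Longrightarrow> 0 \<le> \<nu> x) \<Longrightarrow>
  (\<Sum>x\<in>V. \<mu> x) = 1 \<Longrightarrow> (\<Sum>x\<in>V. \<nu> x) = 1 \<Longrightarrow> 0 \<le> wasserstein V E \<mu> \<nu>"
  by (rule W_ge[OF plan_ex]) (auto intro: cost_nn)

lemma plan_col0: "plan \<mu> \<nu> T \<Longrightarrow> y \<in> V \<Longrightarrow> \<nu> y = 0 \<Longrightarrow> x \<in> V \<Longrightarrow> T (x,y) = 0"
proof -
  assume a: "plan \<mu> \<nu> T" "y \<in> V" "\<nu> y = 0" "x \<in> V"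
  have "(\<Sum>x\<in>V. T (x,y)) = 0" using a unfolding transport_plan_def by auto
  then show ?thesis using a finV sum_nonneg_eq_0_iff[of V "\<lambda>x. T (x,y)"] unfolding transport_plan_def by auto
qed

lemma plan_row0: "plan \<mu> \<nu> T \<Longrightarrow> x \<in> V \<Longrightarrow> \<mu> x = 0 \<Longrightarrow> y \<in> V \<Longrightarrow> T (x,y) = 0"
proof -
  assume a: "plan \<mu> \<nu> T" "x \<in> V" "\<mu> x = 0" "y \<in> V"
  have "(\<Sum>y\<in>V. T (x,y)) = 0" using a unfolding transport_plan_def by auto
  then show ?thesis using a finV sum_nonneg_eq_0_iff[of V "\<lambda>y. T (x,y)"] unfolding transport_plan_def by auto
qed

lemma close_plan:
  assumes mn: "\<And>x. x \<in> V \<Longrightarrow> 0 \<le> \<mu> x" and nn: "\<And>x. x \<in> V \<Longrightarrow> 0 \<le> \<nu> x"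
    and eq: "(\<Sum>x\<in>V. \<mu> x) = (\<Sum>x\<in>V. \<nu> x)"
  shows "\<exists>T. plan \<mu> \<nu> T \<and> cost T \<le> real Dm * (\<Sum>x\<in>V. \<bar>\<mu> x - \<nu> x\<bar>)"
proof -
  define m where "m x = min (\<mu> x) (\<nu> x)" for x
  define a where "a x = \<mu> x - m x" for x
  define b where "b x = \<nu> x - m x" for x
  define r where "r = (\<Sum>x\<in>V. a x)"
  have a0: "\<And>x. 0 \<le> a x" and b0: "\<And>x. 0 \<le> b x" unfolding a_def b_def m_def by auto
  have m0: "\<And>x. x \<in> V \<Longrightarrow> 0 \<le> m x" unfolding m_def using mn nn by auto
  have r0: "0 \<le> r" unfolding r_def using a0 by (auto intro: sum_nonneg)
  have rb: "(\<Sum>x\<in>V. b x) = r" unfolding r_def a_def b_def using eq by (simp add: sum_subtractf)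
  have az: "a x = 0" if "r = 0" "x \<in> V" for x
    using that finV a0 sum_nonneg_eq_0_iff[of V a] unfolding r_def by auto
  have bz: "b x = 0" if "r = 0" "x \<in> V" for x
    using that finV b0 sum_nonneg_eq_0_iff[of V b] rb by auto
  define T where "T p = (if fst p = snd p then m (fst p) else 0) + a (fst p) * b (snd p) / r" for p
  have pl: "plan \<mu> \<nu> T"
    unfolding transport_plan_def
  proof (intro conjI ballI)
    fix x y assume "x \<in> V" "y \<in> V"
    then show "0 \<le> T (x,y)" unfolding T_def using m0 a0 b0 r0 by (auto intro!: divide_nonneg_nonneg)
  next
    fix x assume xV: "x \<in> V"
    have "(\<Sum>y\<in>V. T (x,y)) = (\<Sum>y\<in>V. if x = y then m x else 0) + (\<Sum>y\<in>V. a x * b y / r)"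
      unfolding T_def by (simp add: sum.distrib cong: if_cong)
    also have "\<dots> = m x + a x * (\<Sum>y\<in>V. b y) / r"
      using xV finV by (simp add: sum_divide_distrib[symmetric] sum_distrib_left[symmetric])
    also have "\<dots> = \<mu> x" using rb az xV unfolding a_def by (cases "r = 0") auto
    finally show "(\<Sum>y\<in>V. T (x,y)) = \<mu> x" .
  next
    fix y assume yV: "y \<in> V"
    have "(\<Sum>x\<in>V. T (x,y)) = (\<Sum>x\<in>V. if x = y then m x else 0) + (\<Sum>x\<in>V. a x * b y / r)"
      unfolding T_def by (simp add: sum.distrib cong: if_cong)
    also have "\<dots> = m y + (\<Sum>x\<in>V. a x) * b y / r"
      using yV finV by (simp add: sum_divide_distrib[symmetric] sum_distrib_right[symmetric])
    also have "\<dots> = \<nu> y" using bz yV unfolding r_def[symmetric] b_def by (cases "r = 0") auto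
    finally show "(\<Sum>x\<in>V. T (x,y)) = \<nu> y" .
  qed
  have "cost T = (\<Sum>x\<in>V. \<Sum>y\<in>V. real (gdist E x y) * (a x * b y / r))"
    unfolding cost_def T_def by (intro sum.cong refl) (auto simp: gdist_refl algebra_simps)
  also have "\<dots> \<le> (\<Sum>x\<in>V. \<Sum>y\<in>V. real Dm * (a x * b y / r))"
    using Dm a0 b0 r0 by (intro sum_mono mult_right_mono) (auto intro!: divide_nonneg_nonneg)
  also have "\<dots> = real Dm * (\<Sum>x\<in>V. \<Sum>y\<in>V. a x * b y) / r"
    by (simp add: sum_distrib_left sum_divide_distrib)
  also have "\<dots> = real Dm * ((\<Sum>x\<in>V. a x) * (\<Sum>y\<in>V. b y)) / r"
    by (simp only: sum_product)
  also have "\<dots> = real Dm * r * r / r" using rb unfolding r_def by simp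
  also have "\<dots> \<le> real Dm * r" by (cases "r = 0") auto
  also have "\<dots> \<le> real Dm * (\<Sum>x\<in>V. \<bar>\<mu> x - \<nu> x\<bar>)"
    unfolding r_def a_def m_def by (intro mult_left_mono sum_mono) auto
  finally show ?thesis using pl by blast
qed

lemma W_close:
  assumes "\<And>x. x \<in> V \<Longrightarrow> 0 \<le> \<mu> x" "\<And>x. x \<in> V \<Longrightarrow> 0 \<le> \<nu> x" "(\<Sum>x\<in>V. \<mu> x) = (\<Sum>x\<in>V. \<nu> x)"
  shows "wasserstein V E \<mu> \<nu> \<le> real Dm * (\<Sum>x\<in>V. \<bar>\<mu> x - \<nu> x\<bar>)"
  using close_plan[OF assms] W_le by force


lemma glue:
  assumes p1: "plan \<mu> \<rho> T1" and p2: "plan \<rho> \<sigma> T2"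
  shows "\<exists>T. plan \<mu> \<sigma> T \<and> cost T \<le> cost T1 + cost T2"
proof -
  define K where "K x y z = T1 (x,y) * T2 (y,z) / \<rho> y" for x y z
  have T1nn: "\<And>x y. x \<in> V \<Longrightarrow> y \<in> V \<Longrightarrow> 0 \<le> T1 (x,y)" using p1 unfolding transport_plan_def by auto
  have T2nn: "\<And>x y. x \<in> V \<Longrightarrow> y \<in> V \<Longrightarrow> 0 \<le> T2 (x,y)" using p2 unfolding transport_plan_def by auto
  have Knn: "\<And>x y z. x \<in> V \<Longrightarrow> y \<in> V \<Longrightarrow> z \<in> V \<Longrightarrow> 0 \<le> K x y z"
  proof -
    fix x y z assume V: "x \<in> V" "y \<in> V" "z \<in> V"
    have "0 \<le> \<rho> y" using p1 V(2) T1nn unfolding transport_plan_def by (metis sum_nonneg)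
    then show "0 \<le> K x y z" unfolding K_def using T1nn T2nn V by auto
  qed
  have Kz: "(\<Sum>z\<in>V. K x y z) = T1 (x,y)" if "x \<in> V" "y \<in> V" for x y
  proof (cases "\<rho> y = 0")
    case True then show ?thesis using plan_col0[OF p1 that(2) True that(1)] unfolding K_def by simp
  next
    case False
    have "(\<Sum>z\<in>V. K x y z) = T1 (x,y) * (\<Sum>z\<in>V. T2 (y,z)) / \<rho> y"
      unfolding K_def by (simp add: sum_distrib_left sum_divide_distrib)
    also have "\<dots> = T1 (x,y)" using p2 that False unfolding transport_plan_def by simp
    finally show ?thesis .
  qed
  have Kx: "(\<Sum>x\<in>V. K x y z) = T2 (y,z)" if "y \<in> V" "z \<in> V" for y z
  proof (cases "\<rho> y = 0")
    case True then show ?thesis using plan_row0[OF p2 that(1) True that(2)] unfolding K_def by simp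
  next
    case False
    have "(\<Sum>x\<in>V. K x y z) = (\<Sum>x\<in>V. T1 (x,y)) * T2 (y,z) / \<rho> y"
      unfolding K_def by (simp add: sum_distrib_right sum_divide_distrib)
    also have "\<dots> = T2 (y,z)" using p1 that False unfolding transport_plan_def by simp
    finally show ?thesis .
  qed
  define T where "T p = (\<Sum>y\<in>V. K (fst p) y (snd p))" for p
  have pl: "plan \<mu> \<sigma> T"
    unfolding transport_plan_def
  proof (intro conjI ballI)
    fix x z assume "x \<in> V" "z \<in> V"
    then show "0 \<le> T (x,z)" unfolding T_def by (intro sum_nonneg) (use Knn in auto)
  next
    fix x assume xV: "x \<in> V"
    have "(\<Sum>z\<in>V. T (x,z)) = (\<Sum>z\<in>V. \<Sum>y\<in>V. K x y z)" unfolding T_def by simp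
    also have "\<dots> = (\<Sum>y\<in>V. \<Sum>z\<in>V. K x y z)" by (rule sum.swap)
    also have "\<dots> = (\<Sum>y\<in>V. T1 (x,y))" using Kz xV by simp
    finally show "(\<Sum>z\<in>V. T (x,z)) = \<mu> x" using p1 xV unfolding transport_plan_def by simp
  next
    fix z assume zV: "z \<in> V"
    have "(\<Sum>x\<in>V. T (x,z)) = (\<Sum>x\<in>V. \<Sum>y\<in>V. K x y z)" unfolding T_def by simp
    also have "\<dots> = (\<Sum>y\<in>V. \<Sum>x\<in>V. K x y z)" by (rule sum.swap)
    also have "\<dots> = (\<Sum>y\<in>V. T2 (y,z))" using Kx zV by simp
    finally show "(\<Sum>x\<in>V. T (x,z)) = \<sigma> z" using p2 zV unfolding transport_plan_def by simp
  qed
  let ?d = "\<lambda>x y. real (gdist E x y)"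
  have "cost T = (\<Sum>x\<in>V. \<Sum>z\<in>V. \<Sum>y\<in>V. ?d x z * K x y z)"
    unfolding cost_def T_def by (simp add: sum_distrib_left)
  also have "\<dots> \<le> (\<Sum>x\<in>V. \<Sum>z\<in>V. \<Sum>y\<in>V. ?d x y * K x y z + ?d y z * K x y z)"
  proof (intro sum_mono)
    fix x z y assume V: "x \<in> V" "z \<in> V" "y \<in> V"
    have "?d x z \<le> ?d x y + ?d y z" using gdist_tri[OF V(1) V(3) V(2)] by simp
    then show "?d x z * K x y z \<le> ?d x y * K x y z + ?d y z * K x y z"
      using Knn[OF V(1) V(3) V(2)] by (simp add: mult_right_mono distrib_right[symmetric])
  qed
  also have "\<dots> = (\<Sum>x\<in>V. \<Sum>z\<in>V. \<Sum>y\<in>V. ?d x y * K x y z) + (\<Sum>x\<in>V. \<Sum>z\<in>V. \<Sum>y\<in>V. ?d y z * K x y z)"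
    by (simp add: sum.distrib)
  also have "(\<Sum>x\<in>V. \<Sum>z\<in>V. \<Sum>y\<in>V. ?d x y * K x y z) = (\<Sum>x\<in>V. \<Sum>y\<in>V. \<Sum>z\<in>V. ?d x y * K x y z)"
    by (rule sum.cong[OF refl], rule sum.swap)
  also have "\<dots> = cost T1"
    unfolding cost_def using Kz by (simp add: sum_distrib_left[symmetric])
  also have "(\<Sum>x\<in>V. \<Sum>z\<in>V. \<Sum>y\<in>V. ?d y z * K x y z) = (\<Sum>z\<in>V. \<Sum>x\<in>V. \<Sum>y\<in>V. ?d y z * K x y z)"
    by (rule sum.swap)
  also have "\<dots> = (\<Sum>z\<in>V. \<Sum>y\<in>V. \<Sum>x\<in>V. ?d y z * K x y z)"
    by (rule sum.cong[OF refl], rule sum.swap)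
  also have "\<dots> = (\<Sum>y\<in>V. \<Sum>z\<in>V. \<Sum>x\<in>V. ?d y z * K x y z)"
    by (rule sum.swap)
  also have "\<dots> = cost T2"
    unfolding cost_def using Kx by (simp add: sum_distrib_left[symmetric])
  finally show ?thesis using pl by blast
qed

lemma lower:
  assumes pl: "plan \<mu> \<nu> T" and z: "\<And>x. x \<in> V \<Longrightarrow> \<not> P x \<Longrightarrow> \<mu> x = 0"
  shows "(\<Sum>y\<in>V. if P y then 0 else \<nu> y) \<le> cost T"
proof -
  have Tnn: "\<And>x y. x \<in> V \<Longrightarrow> y \<in> V \<Longrightarrow> 0 \<le> T (x,y)" using pl unfolding transport_plan_def by auto
  have "(\<Sum>y\<in>V. if P y then 0 else \<nu> y) = (\<Sum>y\<in>V. \<Sum>x\<in>V. if P y then 0 else T (x,y))"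
    using pl unfolding transport_plan_def by (intro sum.cong refl) auto
  also have "\<dots> = (\<Sum>x\<in>V. \<Sum>y\<in>V. if P y then 0 else T (x,y))" by (rule sum.swap)
  also have "\<dots> \<le> cost T"
    unfolding cost_def
  proof (intro sum_mono)
    fix x y assume V: "x \<in> V" "y \<in> V"
    show "(if P y then 0 else T (x,y)) \<le> real (gdist E x y) * T (x,y)"
    proof (cases "P y")
      case True then show ?thesis using Tnn V by simp
    next
      case False
      show ?thesis
      proof (cases "P x")
        case True
        then have "x \<noteq> y" using False by auto
        then have "1 \<le> real (gdist E x y)" using gdist_pos V by simp
        then show ?thesis using False Tnn[OF V] by (simp add: mult_le_cancel_right1)
      next
        case False
        then show ?thesis using plan_row0[OF pl V(1) z[OF V(1) False] V(2)] by simp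
      qed
    qed
  qed
  finally show ?thesis .
qed

lemma W_lower:
  assumes "\<And>x. x \<in> V \<Longrightarrow> 0 \<le> \<mu> x" "\<And>x. x \<in> V \<Longrightarrow> 0 \<le> \<nu> x"
    "(\<Sum>x\<in>V. \<mu> x) = 1" "(\<Sum>x\<in>V. \<nu> x) = 1"
    and z: "\<And>x. x \<in> V \<Longrightarrow> \<not> P x \<Longrightarrow> \<mu> x = 0"
  shows "(\<Sum>y\<in>V. if P y then 0 else \<nu> y) \<le> wasserstein V E \<mu> \<nu>"
proof (rule W_ge)
  show "plan \<mu> \<nu> (\<lambda>p. \<mu> (fst p) * \<nu> (snd p))" by (rule plan_ex) (use assms in auto)
next
  fix T assume "plan \<mu> \<nu> T"
  then show "(\<Sum>y\<in>V. if P y then 0 else \<nu> y) \<le> cost T" by (rule lower[OF _ z])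
qed


lemma rowE: "x \<in> V \<Longrightarrow> (\<Sum>y\<in>V. if Q \<and> E x y then c else 0) = (if Q then real (dg x) * c else 0)"
  by (cases Q) (auto simp: deg_sum)

lemma colE: "\<not> nonbip \<Longrightarrow> w \<in> V \<Longrightarrow> y \<in> V \<Longrightarrow>
   (\<Sum>x\<in>V. if par w k x \<and> E x y then c else 0) = (if par w (Suc k) y then real (dg y) * c else 0)"
proof -
  assume nb: "\<not> nonbip" and V: "w \<in> V" "y \<in> V"
  have "(\<Sum>x\<in>V. if par w k x \<and> E x y then c else 0) = (\<Sum>x\<in>V. if \<not> par w k y \<and> E y x then c else 0)"
    using par_edge_iff[OF nb V(1) _ V(2)] by (intro sum.cong refl) auto
  also have "\<dots> = (if \<not> par w k y then real (dg y) * c else 0)" by (rule rowE[OF V(2)])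
  also have "\<dots> = (if par w (Suc k) y then real (dg y) * c else 0)"
    using par_F1[OF V, of k] par_F2[OF nb V(1), of k y] by auto
  finally show ?thesis .
qed

lemma plan_AB:
  assumes nb: "\<not> nonbip" and wV: "w \<in> V"
  shows "\<exists>T. plan (tgt w k) (tgt w (Suc k)) T \<and> cost T = 1"
proof -
  define T where "T p = (if par w k (fst p) \<and> E (fst p) (snd p) then 2 / Dsum else 0)" for p
  have pl: "plan (tgt w k) (tgt w (Suc k)) T"
    unfolding transport_plan_def
  proof (intro conjI ballI)
    fix x y show "0 \<le> T (x,y)" unfolding T_def using Dsum_pos by auto
  next
    fix x assume xV: "x \<in> V"
    show "(\<Sum>y\<in>V. T (x,y)) = tgt w k x"
      unfolding T_def tgt_def stat_def using rowE[OF xV, of "par w k x" "2 / Dsum"] xV by simp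
  next
    fix y assume yV: "y \<in> V"
    show "(\<Sum>x\<in>V. T (x,y)) = tgt w (Suc k) y"
      unfolding T_def tgt_def stat_def using colE[OF nb wV yV, of k "2 / Dsum"] yV by simp
  qed
  have "cost T = (\<Sum>x\<in>V. \<Sum>y\<in>V. T (x,y))"
    unfolding cost_def T_def by (intro sum.cong refl) (auto simp: gdist_edge)
  also have "\<dots> = (\<Sum>x\<in>V. tgt w k x)" using pl unfolding transport_plan_def by simp
  also have "\<dots> = 1" by (rule tgt_sum[OF nb wV])
  finally show ?thesis using pl by blast
qed

lemma plan_Api:
  assumes nb: "\<not> nonbip" and wV: "w \<in> V"
  shows "\<exists>T. plan (tgt w k) stat T \<and> cost T = 1/2"
proof -
  define T where "T p = (if fst p = snd p \<and> par w k (fst p) then stat (fst p) else 0)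
     + (if par w k (fst p) \<and> E (fst p) (snd p) then 1 / Dsum else 0)" for p
  have pl: "plan (tgt w k) stat T"
    unfolding transport_plan_def
  proof (intro conjI ballI)
    fix x y show "0 \<le> T (x,y)" unfolding T_def using Dsum_pos stat_nn by auto
  next
    fix x assume xV: "x \<in> V"
    have "(\<Sum>y\<in>V. T (x,y)) = (\<Sum>y\<in>V. if x = y \<and> par w k x then stat x else 0) + (\<Sum>y\<in>V. if par w k x \<and> E x y then 1 / Dsum else 0)"
      unfolding T_def by (simp add: sum.distrib cong: if_cong)
    also have "(\<Sum>y\<in>V. if x = y \<and> par w k x then stat x else 0) = (if par w k x then stat x else 0)"
      using xV finV by (cases "par w k x") auto
    finally show "(\<Sum>y\<in>V. T (x,y)) = tgt w k x"
      unfolding tgt_def using rowE[OF xV, of "par w k x" "1 / Dsum"] xV by (simp add: stat_def)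
  next
    fix y assume yV: "y \<in> V"
    have "(\<Sum>x\<in>V. T (x,y)) = (\<Sum>x\<in>V. if x = y \<and> par w k y then stat y else 0) + (\<Sum>x\<in>V. if par w k x \<and> E x y then 1 / Dsum else 0)"
      unfolding T_def by (simp add: sum.distrib cong: if_cong) (intro sum.cong refl, auto)
    also have "(\<Sum>x\<in>V. if x = y \<and> par w k y then stat y else 0) = (if par w k y then stat y else 0)"
      using yV finV by (cases "par w k y") auto
    finally show "(\<Sum>x\<in>V. T (x,y)) = stat y"
      using colE[OF nb wV yV, of k "1 / Dsum"] par_F1[OF wV yV, of k] par_F2[OF nb wV, of k y]
      by (auto simp: stat_def)
  qed
  have "cost T = (\<Sum>x\<in>V. \<Sum>y\<in>V. if par w k x \<and> E x y then 1 / Dsum else 0)"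
    unfolding cost_def T_def by (intro sum.cong refl) (auto simp: gdist_edge gdist_refl irr)
  also have "\<dots> = (\<Sum>x\<in>V. (1 / Dsum) * (if par w k x then real (dg x) else 0))"
    by (intro sum.cong refl) (auto simp: rowE)
  also have "\<dots> = (1 / Dsum) * (\<Sum>x\<in>V. if par w k x then real (dg x) else 0)"
    by (rule sum_distrib_left[symmetric])
  also have "\<dots> = (1 / Dsum) * (Dsum / 2)"
    by (simp only: conjunct1[OF half_sum[OF nb wV, of k]])
  also have "\<dots> = 1/2" using Dsum_pos by simp
  finally show ?thesis using pl by blast
qed


end


context gctx begin
lemma squeeze:
  fixes W e :: "nat \<Rightarrow> real"
  assumes "e \<longlonglongrightarrow> 0" "\<And>k. \<bar>W k - L\<bar> \<le> e k"
  shows "W \<longlonglongrightarrow> L"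
proof (rule real_tendsto_sandwich[where f="\<lambda>k. L - e k" and h="\<lambda>k. L + e k"])
  have h: "L - e k \<le> W k \<and> W k \<le> L + e k" for k using assms(2)[of k] by (simp add: abs_le_iff)
  show "\<forall>\<^sub>F n in sequentially. L - e n \<le> W n" by (rule always_eventually) (use h in blast)
  show "\<forall>\<^sub>F n in sequentially. W n \<le> L + e n" by (rule always_eventually) (use h in blast)
  show "(\<lambda>k. L - e k) \<longlonglongrightarrow> L" using tendsto_diff[OF tendsto_const assms(1), of L] by simp
  show "(\<lambda>k. L + e k) \<longlonglongrightarrow> L" using tendsto_add[OF tendsto_const assms(1), of L] by simp
qed

lemma l1_tri: fixes a b c :: "'a \<Rightarrow> real" shows "(\<Sum>x\<in>V. \<bar>a x - b x\<bar>) \<le> (\<Sum>x\<in>V. \<bar>a x - c x\<bar>) + (\<Sum>x\<in>V. \<bar>b x - c x\<bar>)"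
proof -
  have "(\<Sum>x\<in>V. \<bar>a x - b x\<bar>) \<le> (\<Sum>x\<in>V. \<bar>a x - c x\<bar> + \<bar>b x - c x\<bar>)"
  proof (rule sum_mono)
    fix x show "\<bar>a x - b x\<bar> \<le> \<bar>a x - c x\<bar> + \<bar>b x - c x\<bar>"
      using abs_triangle_ineq4[of "a x - c x" "b x - c x"] by simp
  qed
  also have "\<dots> = (\<Sum>x\<in>V. \<bar>a x - c x\<bar>) + (\<Sum>x\<in>V. \<bar>b x - c x\<bar>)" by (rule sum.distrib)
  finally show ?thesis .
qed

lemma W_upper3:
  assumes "\<And>x. x \<in> V \<Longrightarrow> 0 \<le> \<mu> x" "\<And>x. x \<in> V \<Longrightarrow> 0 \<le> \<rho> x"
    "\<And>x. x \<in> V \<Longrightarrow> 0 \<le> \<sigma> x" "\<And>x. x \<in> V \<Longrightarrow> 0 \<le> \<nu> x"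
    "(\<Sum>x\<in>V. \<mu> x) = 1" "(\<Sum>x\<in>V. \<rho> x) = 1" "(\<Sum>x\<in>V. \<sigma> x) = 1" "(\<Sum>x\<in>V. \<nu> x) = 1"
    and p0: "plan \<rho> \<sigma> T0"
  shows "wasserstein V E \<mu> \<nu> \<le> real Dm * (\<Sum>x\<in>V. \<bar>\<mu> x - \<rho> x\<bar>) + cost T0 + real Dm * (\<Sum>x\<in>V. \<bar>\<nu> x - \<sigma> x\<bar>)"
proof -
  obtain T1 where T1: "plan \<mu> \<rho> T1" "cost T1 \<le> real Dm * (\<Sum>x\<in>V. \<bar>\<mu> x - \<rho> x\<bar>)"
    using close_plan[of \<mu> \<rho>] assms by auto
  obtain T3 where T3: "plan \<sigma> \<nu> T3" "cost T3 \<le> real Dm * (\<Sum>x\<in>V. \<bar>\<sigma> x - \<nu> x\<bar>)"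
    using close_plan[of \<sigma> \<nu>] assms by auto
  obtain T12 where T12: "plan \<mu> \<sigma> T12" "cost T12 \<le> cost T1 + cost T0" using glue[OF T1(1) p0] by blast
  obtain T where T: "plan \<mu> \<nu> T" "cost T \<le> cost T12 + cost T3" using glue[OF T12(1) T3(1)] by blast
  have "cost T3 \<le> real Dm * (\<Sum>x\<in>V. \<bar>\<nu> x - \<sigma> x\<bar>)" using T3(2) by (simp add: abs_minus_commute)
  then show ?thesis using W_le[OF T(1)] T(2) T12(2) T1(2) by linarith
qed

lemma main_loc:
  assumes uV: "u \<in> V" and vV: "v \<in> V" and a0: "0 \<le> \<alpha>" and ab: "\<alpha> \<le> \<beta>" and b1: "\<beta> < 1"
  shows "\<exists>L. (L = 0 \<or> L = 1/2 \<or> L = 1) \<and>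
     (\<lambda>k. wasserstein V E (walk_dist V E \<alpha> u k) (walk_dist V E \<beta> v k)) \<longlonglongrightarrow> L"
proof -
  define \<mu> where "\<mu> = walk_dist V E \<alpha> u"
  define \<nu> where "\<nu> = walk_dist V E \<beta> v"
  define W where "W k = wasserstein V E (\<mu> k) (\<nu> k)" for k
  have mnn: "\<And>k x. 0 \<le> \<mu> k x" unfolding \<mu>_def by (rule wd_nonneg) (use a0 ab b1 in auto)
  have nnn: "\<And>k x. 0 \<le> \<nu> k x" unfolding \<nu>_def by (rule wd_nonneg) (use a0 ab b1 in auto)
  have ms: "\<And>k. (\<Sum>x\<in>V. \<mu> k x) = 1" unfolding \<mu>_def by (rule wd_mass[OF uV])
  have ns: "\<And>k. (\<Sum>x\<in>V. \<nu> k x) = 1" unfolding \<nu>_def by (rule wd_mass[OF vV])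
  have W0: "\<And>k. 0 \<le> W k" unfolding W_def by (rule W_nn) (use mnn nnn ms ns in auto)
  have Wc: "\<And>k \<rho>. (\<Sum>x\<in>V. \<rho> x) = 1 \<Longrightarrow> W k \<le> real Dm * ((\<Sum>x\<in>V. \<bar>\<mu> k x - \<rho> x\<bar>) + (\<Sum>x\<in>V. \<bar>\<nu> k x - \<rho> x\<bar>))"
  proof -
    fix k and \<rho> :: "'a \<Rightarrow> real" assume "(\<Sum>x\<in>V. \<rho> x) = 1"
    have "W k \<le> real Dm * (\<Sum>x\<in>V. \<bar>\<mu> k x - \<nu> k x\<bar>)" unfolding W_def
      by (rule W_close) (use mnn nnn ms ns in auto)
    also have "\<dots> \<le> real Dm * ((\<Sum>x\<in>V. \<bar>\<mu> k x - \<rho> x\<bar>) + (\<Sum>x\<in>V. \<bar>\<nu> k x - \<rho> x\<bar>))"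
      by (intro mult_left_mono l1_tri) auto
    finally show "W k \<le> real Dm * ((\<Sum>x\<in>V. \<bar>\<mu> k x - \<rho> x\<bar>) + (\<Sum>x\<in>V. \<bar>\<nu> k x - \<rho> x\<bar>))" .
  qed
  have tnn: "\<And>w k x. 0 \<le> tgt w k x" unfolding tgt_def using stat_nn by auto
  have "\<exists>L. (L = 0 \<or> L = 1/2 \<or> L = 1) \<and> W \<longlonglongrightarrow> L"
  proof (cases "nonbip \<or> 0 < \<alpha>")
    case True
    define e where "e k = real Dm * ((\<Sum>x\<in>V. \<bar>\<mu> k x - stat x\<bar>) + (\<Sum>x\<in>V. \<bar>\<nu> k x - stat x\<bar>))" for k
    have c1: "(\<lambda>k. \<Sum>x\<in>V. \<bar>\<mu> k x - stat x\<bar>) \<longlonglongrightarrow> 0" unfolding \<mu>_def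
      by (rule conv_pi[OF a0 _ uV]) (use True ab b1 in auto)
    have c2: "(\<lambda>k. \<Sum>x\<in>V. \<bar>\<nu> k x - stat x\<bar>) \<longlonglongrightarrow> 0" unfolding \<nu>_def
      by (rule conv_pi[OF _ _ vV]) (use True ab b1 a0 in auto)
    have "e \<longlonglongrightarrow> real Dm * (0 + 0)" unfolding e_def by (intro tendsto_intros c1 c2)
    then have ce: "e \<longlonglongrightarrow> 0" by simp
    have "W \<longlonglongrightarrow> 0"
    proof (rule squeeze[OF ce])
      fix k
      have "W k \<le> e k" unfolding e_def by (rule Wc[OF stat_sum])
      then show "\<bar>W k - 0\<bar> \<le> e k" using W0[of k] by simp
    qed
    then show ?thesis by blast
  next
    case False
    then have nb: "\<not> nonbip" and a00: "\<alpha> = 0" using a0 by auto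
    define e1 where "e1 k = (\<Sum>x\<in>V. \<bar>\<mu> k x - tgt u k x\<bar>)" for k
    have c1: "e1 \<longlonglongrightarrow> 0" unfolding e1_def \<mu>_def a00 by (rule conv_bip[OF nb uV])
    have supp: "\<And>k x. x \<in> V \<Longrightarrow> \<not> par u k x \<Longrightarrow> \<mu> k x = 0"
      unfolding \<mu>_def a00 using par_F6[OF uV] by blast
    show ?thesis
    proof (cases "0 < \<beta>")
      case True
      define e2 where "e2 k = (\<Sum>x\<in>V. \<bar>\<nu> k x - stat x\<bar>)" for k
      have c2: "e2 \<longlonglongrightarrow> 0" unfolding e2_def \<nu>_def using conv_pi[of \<beta> v] True b1 vV by auto
      have "\<forall>k. \<exists>T. plan (tgt u k) stat T \<and> cost T = 1/2" using plan_Api[OF nb uV] by blast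
      then obtain T0 where T0: "\<And>k. plan (tgt u k) stat (T0 k) \<and> cost (T0 k) = 1/2"
        by (metis choice)
      have up: "W k \<le> real Dm * e1 k + 1/2 + real Dm * e2 k" for k
        using W_upper3[of "\<mu> k" "tgt u k" stat "\<nu> k" "T0 k"] T0[of k] mnn nnn tnn stat_nn ms ns
          tgt_sum[OF nb uV] stat_sum unfolding W_def e1_def e2_def by auto
      have lo: "1/2 - e2 k \<le> W k" for k
      proof -
        have h: "(\<Sum>y\<in>V. if par u k y then 0 else stat y) = 1/2"
        proof -
          have "(\<Sum>y\<in>V. if par u k y then 0 else stat y) = (1/Dsum) * (\<Sum>y\<in>V. if par u k y then 0 else real (dg y))"
            unfolding stat_def by (simp add: sum_distrib_left if_distrib cong: if_cong)
          also have "\<dots> = 1/2" using conjunct2[OF half_sum[OF nb uV, of k]] Dsum_pos by simp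
          finally show ?thesis .
        qed
        have "(\<Sum>y\<in>V. if par u k y then 0 else stat y) - (\<Sum>y\<in>V. if par u k y then 0 else \<nu> k y)
            = (\<Sum>y\<in>V. if par u k y then 0 else stat y - \<nu> k y)"
          by (simp add: sum_subtractf[symmetric] if_distrib cong: if_cong)
        also have "\<dots> \<le> e2 k" unfolding e2_def by (intro sum_mono) auto
        finally have "1/2 - e2 k \<le> (\<Sum>y\<in>V. if par u k y then 0 else \<nu> k y)" using h by linarith
        also have "\<dots> \<le> W k" unfolding W_def
          by (rule W_lower[of _ _ "par u k"]) (use mnn nnn ms ns supp in auto)
        finally show ?thesis .
      qed
      define e where "e k = real Dm * e1 k + real Dm * e2 k + e2 k" for k
      have "e \<longlonglongrightarrow> real Dm * 0 + real Dm * 0 + 0" unfolding e_def by (intro tendsto_intros c1 c2)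
      then have ce: "e \<longlonglongrightarrow> 0" by simp
      have "W \<longlonglongrightarrow> 1/2"
      proof (rule squeeze[OF ce])
        fix k
        have "0 \<le> e1 k" "0 \<le> e2 k" unfolding e1_def e2_def by (auto intro: sum_nonneg)
        then have h: "0 \<le> real Dm * e1 k" "0 \<le> real Dm * e2 k" "0 \<le> e2 k" by auto
        show "\<bar>W k - 1/2\<bar> \<le> e k" unfolding e_def
          by (rule abs_leI) (use h up[of k] lo[of k] in linarith)+
      qed
      then show ?thesis by blast
    next
      case False
      then have b00: "\<beta> = 0" using ab a0 by auto
      define e2 where "e2 k = (\<Sum>x\<in>V. \<bar>\<nu> k x - tgt v k x\<bar>)" for k
      have c2: "e2 \<longlonglongrightarrow> 0" unfolding e2_def \<nu>_def b00 by (rule conv_bip[OF nb vV])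
      have e20: "\<And>k. 0 \<le> e2 k" "\<And>k. 0 \<le> e1 k" unfolding e1_def e2_def by (auto intro: sum_nonneg)
      show ?thesis
      proof (cases "Ev u v")
        case True
        have tt: "tgt v k = tgt u k" for k
        proof -
          have "\<And>x. par v k x = par u k x" using same_side[OF uV True] same_side[OF vV Ev_sym[OF True]] by blast
          then show ?thesis unfolding tgt_def by (intro ext) simp
        qed
        define e where "e k = real Dm * (e1 k + e2 k)" for k
        have "e \<longlonglongrightarrow> real Dm * (0 + 0)" unfolding e_def by (intro tendsto_intros c1 c2)
        then have ce: "e \<longlonglongrightarrow> 0" by simp
        have "W \<longlonglongrightarrow> 0"
        proof (rule squeeze[OF ce])
          fix k
          have "W k \<le> e k" unfolding e_def e1_def e2_def using Wc[of "tgt u k" k] tgt_sum[OF nb uV] tt by simp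
          then show "\<bar>W k - 0\<bar> \<le> e k" using W0[of k] by simp
        qed
        then show ?thesis by blast
      next
        case False
        have tt: "tgt v k = tgt u (Suc k)" for k
          unfolding tgt_def using opp_side[OF uV vV False] by (intro ext) simp
        have "\<forall>k. \<exists>T. plan (tgt u k) (tgt u (Suc k)) T \<and> cost T = 1" using plan_AB[OF nb uV] by blast
        then obtain T0 where T0: "\<And>k. plan (tgt u k) (tgt u (Suc k)) (T0 k) \<and> cost (T0 k) = 1"
          by (metis choice)
        have up: "W k \<le> real Dm * e1 k + 1 + real Dm * e2 k" for k
          using W_upper3[of "\<mu> k" "tgt u k" "tgt u (Suc k)" "\<nu> k" "T0 k"] T0[of k] mnn nnn tnn ms ns
            tgt_sum[OF nb uV] unfolding W_def e1_def e2_def tt by auto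
        have lo: "1 \<le> W k" for k
        proof -
          have "(\<Sum>y\<in>V. if par u k y then 0 else \<nu> k y) = (\<Sum>y\<in>V. \<nu> k y)"
          proof (intro sum.cong refl)
            fix y assume yV: "y \<in> V"
            show "(if par u k y then 0 else \<nu> k y) = \<nu> k y"
            proof (cases "par u k y")
              case True
              then have "\<not> par v k y" using opp_side[OF uV vV False] par_F2[OF nb uV, of k y] by blast
              then show ?thesis using par_F6[OF vV, of k y] unfolding \<nu>_def b00 by auto
            qed simp
          qed
          then have "1 = (\<Sum>y\<in>V. if par u k y then 0 else \<nu> k y)" using ns by simp
          also have "\<dots> \<le> W k" unfolding W_def
            by (rule W_lower[of _ _ "par u k"]) (use mnn nnn ms ns supp in auto)
          finally show ?thesis .
        qed
        define e where "e k = real Dm * e1 k + real Dm * e2 k" for k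
        have "e \<longlonglongrightarrow> real Dm * 0 + real Dm * 0" unfolding e_def by (intro tendsto_intros c1 c2)
        then have ce: "e \<longlonglongrightarrow> 0" by simp
        have "W \<longlonglongrightarrow> 1"
        proof (rule squeeze[OF ce])
          fix k
          have h: "0 \<le> real Dm * e1 k" "0 \<le> real Dm * e2 k" using e20 by auto
          show "\<bar>W k - 1\<bar> \<le> e k" unfolding e_def
            by (rule abs_leI) (use h up[of k] lo[of k] in linarith)+
        qed
        then show ?thesis by blast
      qed
    qed
  qed
  then show ?thesis unfolding W_def \<mu>_def \<nu>_def by simp
qed

end



lemma single_step:
  assumes sg: "simple_graph V E" and V1: "V = {x}"
  shows "walk_step V E g mu = mu"
proof (rule ext)
  fix w
  have irr: "\<not> E a a" for a using sg unfolding simple_graph_def by auto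
  have EV: "E a b \<Longrightarrow> a \<in> V \<and> b \<in> V" for a b using sg unfolding simple_graph_def by auto
  have nE: "\<not> E a b" for a b using EV[of a b] irr[of x] V1 by auto
  have "deg V E w = 0" unfolding deg_def using nE by simp
  then show "walk_step V E g mu w = mu w" unfolding walk_step_def using nE by simp
qed

lemma single_wd:
  assumes sg: "simple_graph V E" and V1: "V = {x}"
  shows "walk_dist V E g x k = (\<lambda>y. if y = x then 1 else 0)"
  by (induction k) (auto simp: single_step[OF sg V1])

lemma single_W:
  assumes sg: "simple_graph V E" and V1: "V = {x}"
  shows "wasserstein V E (walk_dist V E a x k) (walk_dist V E b x k) = 0"
proof -
  have g0: "gdist E x x = 0" unfolding gdist_def by simp
  let ?S = "{(\<Sum>p\<in>V \<times> V. real (gdist E (fst p) (snd p)) * T p) | T.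
        transport_plan V (walk_dist V E a x k) (walk_dist V E b x k) T}"
  have c0: "(\<Sum>p\<in>V \<times> V. real (gdist E (fst p) (snd p)) * T p) = 0" for T :: "'a \<times> 'a \<Rightarrow> real"
    using V1 g0 by simp
  have tp: "transport_plan V (walk_dist V E a x k) (walk_dist V E b x k) (\<lambda>_. 1)"
    unfolding transport_plan_def single_wd[OF sg V1] using V1 by simp
  have "?S = {0}"
  proof
    show "?S \<subseteq> {0}" using c0 by blast
    have "\<exists>T. 0 = (\<Sum>p\<in>V \<times> V. real (gdist E (fst p) (snd p)) * T p) \<and>
        transport_plan V (walk_dist V E a x k) (walk_dist V E b x k) T"
      using tp c0 by metis
    then show "{0} \<subseteq> ?S" by simp
  qed
  then show ?thesis unfolding wasserstein_def by simp
qed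

lemma singleton_case:
  assumes sg: "simple_graph V E" and cg: "connected_graph V E" and F: "\<not> (\<forall>x\<in>V. 0 < deg V E x)"
    and uV: "u \<in> V" and vV: "v \<in> V"
  shows "(\<lambda>k. wasserstein V E (walk_dist V E \<alpha> u k) (walk_dist V E \<beta> v k)) \<longlonglongrightarrow> 0"
proof -
  obtain x where xV: "x \<in> V" and d0: "deg V E x = 0" using F by auto
  have fin: "finite V" using sg unfolding simple_graph_def by auto
  have EV: "E a b \<Longrightarrow> a \<in> V \<and> b \<in> V" for a b using sg unfolding simple_graph_def by auto
  have nE: "\<not> E x z" for z
  proof
    assume "E x z"
    then have "z \<in> {y\<in>V. E x y}" using EV by auto
    then have "{y\<in>V. E x y} \<noteq> {}" by blast
    then have "card {y\<in>V. E x y} \<noteq> 0" using fin by simp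
    then show False using d0 unfolding deg_def by simp
  qed
  have yx: "y = x" if "y \<in> V" for y
  proof -
    have "\<exists>n. (E^^n) x y" using cg xV that unfolding connected_graph_def by simp
    then obtain n where n: "(E^^n) x y" by blast
    show ?thesis
    proof (cases n)
      case 0 then show ?thesis using n by simp
    next
      case (Suc m)
      then have "(E^^Suc m) x y" using n by simp
      then obtain z where "E x z" using relpowp_Suc_D2[OF \<open>(E^^Suc m) x y\<close>] by blast
      then show ?thesis using nE by blast
    qed
  qed
  have V1: "V = {x}" using xV yx by blast
  have "u = x" "v = x" using uV vV yx by auto
  then have "\<And>k. wasserstein V E (walk_dist V E \<alpha> u k) (walk_dist V E \<beta> v k) = 0"
    using single_W[OF sg V1] by simp
  then show ?thesis by simp
qed

theorem corollary3p12:
  fixes V :: "'a set" and E :: "'a \<Rightarrow> 'a \<Rightarrow> bool" and u v :: 'a and \<alpha> \<beta> :: real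
  assumes "simple_graph V E" and "connected_graph V E"
    and "u \<in> V" and "v \<in> V"
    and "0 \<le> \<alpha>" and "\<alpha> \<le> \<beta>" and "\<beta> \<le> 1"
  defines "W \<equiv> (\<lambda>k. wasserstein V E (walk_dist V E \<alpha> u k) (walk_dist V E \<beta> v k))"
  shows "let c1 = (W \<longlonglongrightarrow> 1 \<and> \<beta> < 1);
             c2 = (W \<longlonglongrightarrow> 1/2 \<and> \<beta> < 1);
             c3 = (W \<longlonglongrightarrow> 0 \<and> \<beta> < 1);
             c4 = (\<beta> = 1)
         in (c1 \<and> \<not> c2 \<and> \<not> c3 \<and> \<not> c4) \<or> (\<not> c1 \<and> c2 \<and> \<not> c3 \<and> \<not> c4) \<or>
            (\<not> c1 \<and> \<not> c2 \<and> c3 \<and> \<not> c4) \<or> (\<not> c1 \<and> \<not> c2 \<and> \<not> c3 \<and> c4)"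
proof (cases "\<beta> = 1")
  case True
  then show ?thesis unfolding Let_def by simp
next
  case False
  then have b1: "\<beta> < 1" using assms(7) by simp
  have "\<exists>L. (L = 0 \<or> L = 1/2 \<or> L = 1) \<and> W \<longlonglongrightarrow> L"
  proof (cases "\<forall>x\<in>V. 0 < deg V E x")
    case True
    have loc: "gctx V E" unfolding gctx_def using assms(1,2) True by blast
    show ?thesis unfolding W_def by (rule gctx.main_loc[OF loc assms(3,4,5,6) b1])
  next
    case False
    have "W \<longlonglongrightarrow> 0" unfolding W_def by (rule singleton_case[OF assms(1,2) False assms(3,4)])
    then show ?thesis by blast
  qed
  then obtain L where L: "L = 0 \<or> L = 1/2 \<or> L = 1" "W \<longlonglongrightarrow> L" by blast
  have u: "W \<longlonglongrightarrow> M \<longleftrightarrow> M = L" for M using L(2) LIMSEQ_unique by blast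
  have ne: "(0::real) \<noteq> 1/2" "(0::real) \<noteq> 1" "(1/2::real) \<noteq> 1" by auto
  show ?thesis unfolding Let_def u using L(1) b1 False ne by auto
qed


end
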